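(* With notation as in the context, let $0\ne b\in\mathcal B_0$ be written as $b=\sum_{U\in\mathcal U}\lambda_U\chi_U$, where $\mathcal U$ is a finite family of nonempty pairwise disjoint clopen subsets of $X$ and $\lambda_U\in K\setminus\{0\}$. Then there exists $W\in\mathcal V$ with $h_W\cdot b\ne0$.
   Context: Let $X$ be an infinite, totally disconnected, compact metrizable space, $T$ a homeomorphism of $X$, $\mu$ a full (positive on nonempty open sets), ergodic, $T$-invariant Borel probability measure, $K$ a field with involution, $C_K(X)$ the $*$-algebra of locally constant functions $X\to K$, and $\mathcal A=C_K(X)\rtimes_T\mathbb Z$ the algebraic crossed product (finite sums $\sum f_it^i$, $tf=(f\circ T^{-1})t$, $(ft^i)^*=t^{-i}f^*$). Let $E$ be a nonempty clopen set, $\mathcal P$ a partition of $X\setminus E$ (finite family of nonempty pairwise disjoint clopen sets with union $X\setminus E$), $\mathcal B$ the unital $*$-subalgebra of $\mathcal A$ generated by $\{\chi_Zt:Z\in\mathcal P\}$, and $\mathcal B_0=C_K(X)\cap\mathcal B$. $\mathcal V$ is the set of nonempty sets $W=E\cap T^{-1}(Z_1)\cap\cdots\cap T^{-k+1}(Z_{k-1})\cap T^{-k}(E)$ ($k\ge1$, $Z_i\in\mathcal P$), $|W|=k$, and $h_W=\sum_{l=0}^{|W|-1}\chi_{T^l(W)}$. *)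

theory Defs
  imports "HOL-Probability.Probability"
begin

definition totally_disconnected_space :: "'a::topological_space itself \<Rightarrow> bool" where
  "totally_disconnected_space _ \<longleftrightarrow>
     (\<forall>S::'a set. connected S \<longrightarrow> (\<forall>x\<in>S. \<forall>y\<in>S. x = y))"

definition clopen_set :: "'a::topological_space set \<Rightarrow> bool" where
  "clopen_set S \<longleftrightarrow> open S \<and> closed S"

definition locally_const :: "('a::topological_space \<Rightarrow> 'k) \<Rightarrow> bool" where
  "locally_const f \<longleftrightarrow> (\<forall>x. \<exists>U. open U \<and> x \<in> U \<and> (\<forall>y\<in>U. f y = f x))"

definition full_measure :: "'a::topological_space measure \<Rightarrow> bool" where
  "full_measure \<mu> \<longleftrightarrow> (\<forall>U. open U \<and> U \<noteq> {} \<longrightarrow> emeasure \<mu> U > 0)"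

definition invariant_measure :: "('a::topological_space \<Rightarrow> 'a) \<Rightarrow> 'a measure \<Rightarrow> bool" where
  "invariant_measure T \<mu> \<longleftrightarrow> (\<forall>A\<in>sets borel. emeasure \<mu> (T -` A) = emeasure \<mu> A)"

definition ergodic_measure :: "('a::topological_space \<Rightarrow> 'a) \<Rightarrow> 'a measure \<Rightarrow> bool" where
  "ergodic_measure T \<mu> \<longleftrightarrow>
     (\<forall>A\<in>sets borel. T -` A = A \<longrightarrow> emeasure \<mu> A = 0 \<or> emeasure \<mu> A = 1)"

definition field_involution :: "('k::field \<Rightarrow> 'k) \<Rightarrow> bool" where
  "field_involution c \<longleftrightarrow> (\<forall>x y. c (x + y) = c x + c y) \<and> (\<forall>x y. c (x * y) = c x * c y)
      \<and> (\<forall>x. c (c x) = x)"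

text \<open>An element \<open>\<Sum> f_i t^i\<close> is represented by its coefficient function
  \<open>a :: int \<Rightarrow> 'a \<Rightarrow> 'k\<close>, with \<open>a i = f_i\<close> (finitely many nonzero, each locally constant).\<close>

definition tpow :: "('a \<Rightarrow> 'a) \<Rightarrow> int \<Rightarrow> 'a \<Rightarrow> 'a" where
  "tpow T i = (if 0 \<le> i then T ^^ nat i else (inv T) ^^ nat (- i))"

definition cp_elems :: "(int \<Rightarrow> 'a::topological_space \<Rightarrow> 'k::field) set" where
  "cp_elems = {a. finite {i. a i \<noteq> (\<lambda>_. 0)} \<and> (\<forall>i. locally_const (a i))}"

definition cp_zero :: "int \<Rightarrow> 'a \<Rightarrow> 'k::field" where
  "cp_zero = (\<lambda>n x. 0)"

definition cp_one :: "int \<Rightarrow> 'a \<Rightarrow> 'k::field" where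
  "cp_one = (\<lambda>n x. if n = 0 then 1 else 0)"

definition cp_add :: "(int \<Rightarrow> 'a \<Rightarrow> 'k::field) \<Rightarrow> (int \<Rightarrow> 'a \<Rightarrow> 'k) \<Rightarrow> int \<Rightarrow> 'a \<Rightarrow> 'k" where
  "cp_add a b = (\<lambda>n x. a n x + b n x)"

definition cp_smul :: "'k::field \<Rightarrow> (int \<Rightarrow> 'a \<Rightarrow> 'k) \<Rightarrow> int \<Rightarrow> 'a \<Rightarrow> 'k" where
  "cp_smul l a = (\<lambda>n x. l * a n x)"

text \<open>\<open>(f t^i)(g t^j) = f (g \<circ> T^{-i}) t^{i+j}\<close>.\<close>
definition cp_mult :: "('a \<Rightarrow> 'a) \<Rightarrow> (int \<Rightarrow> 'a \<Rightarrow> 'k::field) \<Rightarrow> (int \<Rightarrow> 'a \<Rightarrow> 'k) \<Rightarrow> int \<Rightarrow> 'a \<Rightarrow> 'k" where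
  "cp_mult T a b = (\<lambda>n x. \<Sum>i\<in>{i. a i \<noteq> (\<lambda>_. 0)}. a i x * b (n - i) (tpow T (- i) x))"

text \<open>\<open>(f t^i)^* = t^{-i} f^* = (f^* \<circ> T^i) t^{-i}\<close>.\<close>
definition cp_star :: "('a \<Rightarrow> 'a) \<Rightarrow> ('k::field \<Rightarrow> 'k) \<Rightarrow> (int \<Rightarrow> 'a \<Rightarrow> 'k) \<Rightarrow> int \<Rightarrow> 'a \<Rightarrow> 'k" where
  "cp_star T c a = (\<lambda>n x. c (a (- n) (tpow T (- n) x)))"

definition cp_mono :: "('a \<Rightarrow> 'k::field) \<Rightarrow> int \<Rightarrow> int \<Rightarrow> 'a \<Rightarrow> 'k" where
  "cp_mono f i = (\<lambda>n x. if n = i then f x else 0)"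

definition chi :: "'a set \<Rightarrow> 'a \<Rightarrow> 'k::field" where
  "chi S = (\<lambda>x. if x \<in> S then 1 else 0)"

inductive_set gen_star_alg ::
  "('a \<Rightarrow> 'a) \<Rightarrow> ('k::field \<Rightarrow> 'k) \<Rightarrow> (int \<Rightarrow> 'a \<Rightarrow> 'k) set \<Rightarrow> (int \<Rightarrow> 'a \<Rightarrow> 'k) set"
  for T c G where
  gen: "g \<in> G \<Longrightarrow> g \<in> gen_star_alg T c G"
| one: "cp_one \<in> gen_star_alg T c G"
| add: "a \<in> gen_star_alg T c G \<Longrightarrow> b \<in> gen_star_alg T c G \<Longrightarrow> cp_add a b \<in> gen_star_alg T c G"
| smul: "a \<in> gen_star_alg T c G \<Longrightarrow> cp_smul l a \<in> gen_star_alg T c G"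
| mult: "a \<in> gen_star_alg T c G \<Longrightarrow> b \<in> gen_star_alg T c G \<Longrightarrow> cp_mult T a b \<in> gen_star_alg T c G"
| star: "a \<in> gen_star_alg T c G \<Longrightarrow> cp_star T c a \<in> gen_star_alg T c G"

definition is_partition_of :: "'a::topological_space set set \<Rightarrow> 'a set \<Rightarrow> bool" where
  "is_partition_of P Y \<longleftrightarrow> finite P \<and> (\<forall>Z\<in>P. Z \<noteq> {} \<and> clopen_set Z)
     \<and> (\<forall>Z1\<in>P. \<forall>Z2\<in>P. Z1 \<noteq> Z2 \<longrightarrow> Z1 \<inter> Z2 = {}) \<and> \<Union>P = Y"

definition algB :: "('a \<Rightarrow> 'a) \<Rightarrow> ('k::field \<Rightarrow> 'k) \<Rightarrow> 'a set set \<Rightarrow> (int \<Rightarrow> 'a \<Rightarrow> 'k) set" where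
  "algB T c P = gen_star_alg T c {cp_mono (chi Z) 1 | Z. Z \<in> P}"

text \<open>\<open>B_0 = C_K(X) \<inter> B\<close>: elements of B supported in degree 0 (identified with their
  degree-0 coefficient in C_K(X)).\<close>
definition algB0 :: "('a \<Rightarrow> 'a) \<Rightarrow> ('k::field \<Rightarrow> 'k) \<Rightarrow> 'a set set \<Rightarrow> (int \<Rightarrow> 'a \<Rightarrow> 'k) set" where
  "algB0 T c P = {b \<in> algB T c P. \<forall>n. n \<noteq> 0 \<longrightarrow> b n = (\<lambda>_. 0)}"

definition Wset :: "('a \<Rightarrow> 'a) \<Rightarrow> 'a set \<Rightarrow> nat \<Rightarrow> (nat \<Rightarrow> 'a set) \<Rightarrow> 'a set" where
  "Wset T E k Z = E \<inter> (\<Inter>i\<in>{1..<k}. (T ^^ i) -` Z i) \<inter> (T ^^ k) -` E"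

text \<open>\<open>W \<in> V\<close> with \<open>|W| = k\<close>.\<close>
definition inV :: "('a \<Rightarrow> 'a) \<Rightarrow> 'a set \<Rightarrow> 'a set set \<Rightarrow> 'a set \<Rightarrow> nat \<Rightarrow> bool" where
  "inV T E P W k \<longleftrightarrow> 1 \<le> k \<and> W \<noteq> {} \<and>
     (\<exists>Z. (\<forall>i\<in>{1..<k}. Z i \<in> P) \<and> W = Wset T E k Z)"

definition hW :: "('a \<Rightarrow> 'a) \<Rightarrow> 'a set \<Rightarrow> nat \<Rightarrow> int \<Rightarrow> 'a \<Rightarrow> 'k::field" where
  "hW T W k = cp_mono (\<lambda>x. \<Sum>l<k. chi ((T ^^ l) ` W) x) 0"

end

theory Submission
  imports Defs
begin

lemma funpow_preimage_borel:
  fixes f :: "'a::topological_space \<Rightarrow> 'a"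
  assumes f: "f \<in> borel_measurable borel" and A: "A \<in> sets borel"
  shows "(f^^n) -` A \<in> sets borel"
  using A
proof (induction n arbitrary: A)
  case 0 then show ?case by simp
next
  case (Suc n)
  have "(f^^Suc n) -` A = f -` ((f^^n) -` A)" by (auto simp: funpow_swap1)
  moreover have "f -` ((f^^n) -` A) \<in> sets borel"
    using measurable_sets[OF f Suc.IH[OF Suc.prems]] by simp
  ultimately show ?case by metis
qed

lemma funpow_preimage_emeasure:
  fixes f :: "'a::topological_space \<Rightarrow> 'a"
  assumes f: "f \<in> borel_measurable borel" and A: "A \<in> sets borel"
    and inv: "\<forall>A\<in>sets borel. emeasure \<mu> (f -` A) = emeasure \<mu> A"
  shows "emeasure \<mu> ((f^^n) -` A) = emeasure \<mu> A"
  using A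
proof (induction n arbitrary: A)
  case 0 then show ?case by simp
next
  case (Suc n)
  have "(f^^Suc n) -` A = (f^^n) -` (f -` A)"
    by auto
  moreover have "f -` A \<in> sets borel"
    using measurable_sets[OF f Suc.prems] by simp
  ultimately show ?case using Suc.IH inv Suc.prems by metis
qed

lemma Ninf_not_one:
  fixes f :: "'a::topological_space \<Rightarrow> 'a"
  assumes sb: "sets \<mu> = sets borel" and ps: "prob_space \<mu>"
    and f: "f \<in> borel_measurable borel"
    and inv: "\<forall>A\<in>sets borel. emeasure \<mu> (f -` A) = emeasure \<mu> A"
    and E: "E \<in> sets borel" and Epos: "emeasure \<mu> E > 0"
  shows "{x. \<exists>N. \<forall>n\<ge>N. (f^^n) x \<notin> E} \<in> sets borel"
    and "emeasure \<mu> {x. \<exists>N. \<forall>n\<ge>N. (f^^n) x \<notin> E} \<noteq> 1"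
proof -
  define N0 where "N0 = (\<Inter>n. (f^^n) -` (- E))"
  define A where "A = (\<lambda>N. (f^^N) -` N0)"
  have N0b: "N0 \<in> sets borel" unfolding N0_def
    using funpow_preimage_borel[OF f] E by (intro sets.countable_INT') auto
  have Ab: "A N \<in> sets borel" for N unfolding A_def using funpow_preimage_borel[OF f N0b] .
  have eq: "{x. \<exists>N. \<forall>n\<ge>N. (f^^n) x \<notin> E} = (\<Union>N. A N)"
  proof -
    have "x \<in> A N \<longleftrightarrow> (\<forall>n\<ge>N. (f^^n) x \<notin> E)" for x N
    proof -
      have "x \<in> A N \<longleftrightarrow> (\<forall>m. (f^^(m+N)) x \<notin> E)"
        unfolding A_def N0_def by (simp add: funpow_add)
      also have "\<dots> \<longleftrightarrow> (\<forall>n\<ge>N. (f^^n) x \<notin> E)"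
        by (metis le_add2 le_add_diff_inverse2)
      finally show ?thesis .
    qed
    then show ?thesis by auto
  qed
  show "{x. \<exists>N. \<forall>n\<ge>N. (f^^n) x \<notin> E} \<in> sets borel"
    unfolding eq using Ab by auto
  have inc: "incseq A"
  proof (rule incseq_SucI)
    fix N
    have key: "\<And>x m. (f ^^ m) ((f ^^ Suc N) x) = (f ^^ Suc m) ((f ^^ N) x)"
      by (metis add_Suc add_Suc_right comp_apply funpow_add)
    show "A N \<subseteq> A (Suc N)"
      unfolding A_def N0_def using key by (auto simp del: funpow.simps)
  qed
  have "emeasure \<mu> (\<Union>N. A N) = (SUP N. emeasure \<mu> (A N))"
    using SUP_emeasure_incseq[of A \<mu>] inc Ab sb by (metis image_subset_iff)
  also have "\<dots> = emeasure \<mu> N0"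
    unfolding A_def using funpow_preimage_emeasure[OF f N0b inv] by simp
  finally have m: "emeasure \<mu> (\<Union>N. A N) = emeasure \<mu> N0" .
  have dis: "N0 \<inter> E = {}" unfolding N0_def by (auto, metis funpow_0)
  have "emeasure \<mu> N0 + emeasure \<mu> E = emeasure \<mu> (N0 \<union> E)"
    using plus_emeasure[of N0 \<mu> E] N0b E sb dis by auto
  also have "\<dots> \<le> 1" using prob_space.emeasure_le_1[OF ps] .
  finally have le: "emeasure \<mu> N0 + emeasure \<mu> E \<le> 1" .
  show "emeasure \<mu> {x. \<exists>N. \<forall>n\<ge>N. (f^^n) x \<notin> E} \<noteq> 1"
  proof
    assume "emeasure \<mu> {x. \<exists>N. \<forall>n\<ge>N. (f^^n) x \<notin> E} = 1"
    then have "emeasure \<mu> N0 = 1" using eq m by simp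
    with le have "1 + emeasure \<mu> E \<le> 1 + 0" by simp
    then have "emeasure \<mu> E \<le> 0" by (simp only: ennreal_add_left_cancel_le) simp
    with Epos show False by simp
  qed
qed

lemma funpow_cancel:
  assumes "\<forall>y. f (h y) = y"
  shows "(f^^a) ((h^^(a+c)) y) = (h^^c) y"
proof (induction a)
  case 0 then show ?case by simp
next
  case (Suc a)
  have e1: "(h^^(Suc a + c)) y = h ((h^^(a+c)) y)" by simp
  have e2: "\<And>z. (f^^Suc a) z = (f^^a) (f z)" by (simp only: funpow_Suc_right comp_apply)
  show ?case using Suc assms e1 e2 by metis
qed

theorem lemma3p11:
  fixes T :: "'a::metric_space \<Rightarrow> 'a"
    and \<mu> :: "'a measure"
    and c :: "'k::field \<Rightarrow> 'k"
    and E :: "'a set"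
    and P :: "'a set set"
    and b :: "int \<Rightarrow> 'a \<Rightarrow> 'k"
    and \<U> :: "'a set set"
    and lam :: "'a set \<Rightarrow> 'k"
  assumes X_infinite: "infinite (UNIV :: 'a set)"
    and X_compact: "compact (UNIV :: 'a set)"
    and X_tdisc: "totally_disconnected_space TYPE('a)"
    and T_homeo: "\<exists>g. homeomorphism UNIV UNIV T g"
    and \<mu>_borel: "sets \<mu> = sets borel"
    and \<mu>_prob: "prob_space \<mu>"
    and \<mu>_full: "full_measure \<mu>"
    and \<mu>_inv: "invariant_measure T \<mu>"
    and \<mu>_erg: "ergodic_measure T \<mu>"
    and c_inv: "field_involution c"
    and E_ne: "E \<noteq> {}"
    and E_clopen: "clopen_set E"
    and P_part: "is_partition_of P (- E)"
    and b_B0: "b \<in> algB0 T c P"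
    and b_nz: "b \<noteq> cp_zero"
    and U_fin: "finite \<U>"
    and U_sets: "\<forall>U\<in>\<U>. U \<noteq> {} \<and> clopen_set U"
    and U_disj: "\<forall>U1\<in>\<U>. \<forall>U2\<in>\<U>. U1 \<noteq> U2 \<longrightarrow> U1 \<inter> U2 = {}"
    and lam_nz: "\<forall>U\<in>\<U>. lam U \<noteq> 0"
    and b_repr: "b 0 = (\<lambda>x. \<Sum>U\<in>\<U>. lam U * chi U x)"
  shows "\<exists>W k. inV T E P W k \<and> cp_mult T (hW T W k) b \<noteq> cp_zero"
  proof -
  obtain g where hom: "homeomorphism UNIV UNIV T g" using T_homeo by blast
  have gT: "\<forall>x. g (T x) = x" and Tg: "\<forall>y. T (g y) = y"
    using hom unfolding homeomorphism_def by auto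
  have contT: "continuous_on UNIV T" and contg: "continuous_on UNIV g"
    using hom unfolding homeomorphism_def by auto
  have Tm: "T \<in> borel_measurable borel" by (rule borel_measurable_continuous_onI[OF contT])
  have gm: "g \<in> borel_measurable borel" by (rule borel_measurable_continuous_onI[OF contg])
  have invT: "\<forall>A\<in>sets borel. emeasure \<mu> (T -` A) = emeasure \<mu> A"
    using \<mu>_inv unfolding invariant_measure_def by blast
  have invg: "\<forall>A\<in>sets borel. emeasure \<mu> (g -` A) = emeasure \<mu> A"
  proof
    fix A :: "'a set" assume A: "A \<in> sets borel"
    have gA: "g -` A \<in> sets borel" using measurable_sets[OF gm A] by simp
    have "T -` (g -` A) = A" using gT by auto
    moreover have "emeasure \<mu> (T -` (g -` A)) = emeasure \<mu> (g -` A)" using invT gA by blast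
    ultimately show "emeasure \<mu> (g -` A) = emeasure \<mu> A" by simp
  qed
  have Eopen: "open E" using E_clopen unfolding clopen_set_def by blast
  have Eb: "E \<in> sets borel" using Eopen by simp
  have Epos: "emeasure \<mu> E > 0" using \<mu>_full E_ne Eopen unfolding full_measure_def by blast
  define NT where "NT = {x. \<exists>N. \<forall>n\<ge>N. (T^^n) x \<notin> E}"
  define Ng where "Ng = {x. \<exists>N. \<forall>n\<ge>N. (g^^n) x \<notin> E}"
  have NTb: "NT \<in> sets borel" and NT1: "emeasure \<mu> NT \<noteq> 1"
    unfolding NT_def by (rule Ninf_not_one(1)[OF \<mu>_borel \<mu>_prob Tm invT Eb Epos],
      rule Ninf_not_one(2)[OF \<mu>_borel \<mu>_prob Tm invT Eb Epos])
  have Ngb: "Ng \<in> sets borel" and Ng1: "emeasure \<mu> Ng \<noteq> 1"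
    unfolding Ng_def by (rule Ninf_not_one(1)[OF \<mu>_borel \<mu>_prob gm invg Eb Epos],
      rule Ninf_not_one(2)[OF \<mu>_borel \<mu>_prob gm invg Eb Epos])
  have TT: "\<And>n x. (T^^n) (T x) = (T^^Suc n) x" by (simp only: funpow_Suc_right comp_apply)
  have gg: "\<And>n x. (g^^Suc n) (T x) = (g^^n) x" using gT by (simp only: funpow_Suc_right comp_apply)
  have NTinv: "T -` NT = NT"
  proof (intro set_eqI iffI)
    fix x assume "x \<in> T -` NT"
    then obtain N where h: "\<forall>n\<ge>N. (T^^n) (T x) \<notin> E" unfolding NT_def by auto
    have "\<forall>n\<ge>Suc N. (T^^n) x \<notin> E"
    proof (intro allI impI)
      fix n assume "Suc N \<le> n"
      then obtain m where m: "n = Suc m" "m \<ge> N" by (cases n) auto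
      show "(T^^n) x \<notin> E" using h m TT by metis
    qed
    then show "x \<in> NT" unfolding NT_def by blast
  next
    fix x assume "x \<in> NT"
    then obtain N where h: "\<forall>n\<ge>N. (T^^n) x \<notin> E" unfolding NT_def by auto
    have "\<forall>n\<ge>N. (T^^n) (T x) \<notin> E" using h TT by (metis le_SucI)
    then show "x \<in> T -` NT" unfolding NT_def by blast
  qed
  have Nginv: "T -` Ng = Ng"
  proof (intro set_eqI iffI)
    fix x assume "x \<in> T -` Ng"
    then obtain N where h: "\<forall>n\<ge>N. (g^^n) (T x) \<notin> E" unfolding Ng_def by auto
    have "\<forall>n\<ge>N. (g^^n) x \<notin> E" using h gg by (metis le_SucI)
    then show "x \<in> Ng" unfolding Ng_def by blast
  next
    fix x assume "x \<in> Ng"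
    then obtain N where h: "\<forall>n\<ge>N. (g^^n) x \<notin> E" unfolding Ng_def by auto
    have "\<forall>n\<ge>Suc N. (g^^n) (T x) \<notin> E"
    proof (intro allI impI)
      fix n assume "Suc N \<le> n"
      then obtain m where m: "n = Suc m" "m \<ge> N" by (cases n) auto
      show "(g^^n) (T x) \<notin> E" using h m gg by metis
    qed
    then show "x \<in> T -` Ng" unfolding Ng_def by blast
  qed
  have NT0: "emeasure \<mu> NT = 0" using \<mu>_erg NTb NTinv NT1 unfolding ergodic_measure_def by blast
  have Ng0: "emeasure \<mu> Ng = 0" using \<mu>_erg Ngb Nginv Ng1 unfolding ergodic_measure_def by blast
  have Une: "\<U> \<noteq> {}"
  proof
    assume "\<U> = {}"
    then have "b 0 = (\<lambda>_. 0)" using b_repr by simp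
    moreover have "\<forall>n. n \<noteq> 0 \<longrightarrow> b n = (\<lambda>_. 0)" using b_B0 unfolding algB0_def by blast
    ultimately have "b = cp_zero" unfolding cp_zero_def by (intro ext) (metis)
    with b_nz show False by simp
  qed
  then obtain U where UU: "U \<in> \<U>" by blast
  have Uopen: "open U" and Une': "U \<noteq> {}" using U_sets UU unfolding clopen_set_def by auto
  have Upos: "emeasure \<mu> U > 0" using \<mu>_full Uopen Une' unfolding full_measure_def by blast
  have "\<not> U \<subseteq> NT \<union> Ng"
  proof
    assume sub: "U \<subseteq> NT \<union> Ng"
    have "emeasure \<mu> U \<le> emeasure \<mu> (NT \<union> Ng)"
      using emeasure_mono[OF sub] NTb Ngb \<mu>_borel by auto
    also have "\<dots> \<le> emeasure \<mu> NT + emeasure \<mu> Ng"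
      using emeasure_subadditive[of NT \<mu> Ng] NTb Ngb \<mu>_borel by auto
    finally show False using NT0 Ng0 Upos by simp
  qed
  then obtain x where xU: "x \<in> U" and xNT: "x \<notin> NT" and xNg: "x \<notin> Ng" by blast
  have fwd: "\<exists>n. 1 \<le> n \<and> (T^^n) x \<in> E" using xNT unfolding NT_def by blast
  have bwd: "\<exists>m. (g^^m) x \<in> E" using xNg unfolding Ng_def by blast
  define m0 where "m0 = (LEAST m. (g^^m) x \<in> E)"
  define n0 where "n0 = (LEAST n. 1 \<le> n \<and> (T^^n) x \<in> E)"
  have m0E: "(g^^m0) x \<in> E" unfolding m0_def using bwd by (metis LeastI)
  have m0min: "\<And>j. j < m0 \<Longrightarrow> (g^^j) x \<notin> E" unfolding m0_def using not_less_Least by blast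
  have n0E: "1 \<le> n0 \<and> (T^^n0) x \<in> E" unfolding n0_def using fwd by (rule LeastI_ex)
  have n0min: "\<And>j. j < n0 \<Longrightarrow> 1 \<le> j \<Longrightarrow> (T^^j) x \<notin> E"
    unfolding n0_def using not_less_Least by blast
  define w where "w = (g^^m0) x"
  define k where "k = m0 + n0"
  have Tw_le: "\<And>i. i \<le> m0 \<Longrightarrow> (T^^i) w = (g^^(m0 - i)) x"
    unfolding w_def using funpow_cancel[of T g, OF Tg] by (metis le_add_diff_inverse)
  have Twm0: "(T^^m0) w = x" using Tw_le[of m0] by simp
  have Tw_ge: "\<And>i. m0 \<le> i \<Longrightarrow> (T^^i) w = (T^^(i - m0)) x"
    using Twm0 by (metis funpow_add comp_apply le_add_diff_inverse2)
  have wE: "w \<in> E" using m0E w_def by simp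
  have TkE: "(T^^k) w \<in> E" using Tw_ge[of k] n0E unfolding k_def by simp
  have notE: "\<And>i. 1 \<le> i \<Longrightarrow> i < k \<Longrightarrow> (T^^i) w \<notin> E"
  proof -
    fix i assume i: "1 \<le> i" "i < k"
    show "(T^^i) w \<notin> E"
    proof (cases "i \<le> m0")
      case True
      then show ?thesis using Tw_le m0min i by (metis diff_less less_le_trans zero_less_one)
    next
      case False
      then show ?thesis using Tw_ge[of i] n0min[of "i - m0"] i unfolding k_def by auto
    qed
  qed
  have Pcov: "\<Union>P = - E" and Pall: "\<forall>Z\<in>P. Z \<noteq> {}"
    using P_part unfolding is_partition_of_def by auto
  define Z where "Z = (\<lambda>i. SOME Z. Z \<in> P \<and> (T^^i) w \<in> Z)"
  have Zi: "\<And>i. 1 \<le> i \<Longrightarrow> i < k \<Longrightarrow> Z i \<in> P \<and> (T^^i) w \<in> Z i"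
  proof -
    fix i assume "1 \<le> i" "i < k"
    then have "(T^^i) w \<in> \<Union>P" using notE Pcov by auto
    then have "\<exists>Y. Y \<in> P \<and> (T^^i) w \<in> Y" by blast
    then show "Z i \<in> P \<and> (T^^i) w \<in> Z i" unfolding Z_def by (rule someI_ex)
  qed
  have ZnE: "\<And>i. 1 \<le> i \<Longrightarrow> i < k \<Longrightarrow> Z i \<inter> E = {}" using Zi Pcov by blast
  define W where "W = Wset T E k Z"
  have wW: "w \<in> W" unfolding W_def Wset_def using wE TkE Zi by auto
  have WE: "W \<subseteq> E" unfolding W_def Wset_def by auto
  have Wi: "\<And>v i. v \<in> W \<Longrightarrow> 1 \<le> i \<Longrightarrow> i < k \<Longrightarrow> (T^^i) v \<notin> E"
  proof -
    fix v i assume "v \<in> W" "1 \<le> i" "i < k"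
    then have "(T^^i) v \<in> Z i" unfolding W_def Wset_def by auto
    then show "(T^^i) v \<notin> E" using ZnE \<open>1 \<le> i\<close> \<open>i < k\<close> by blast
  qed
  have k1: "1 \<le> k" using n0E unfolding k_def by simp
  have m0k: "m0 < k" using n0E unfolding k_def by simp
  have inv: "inV T E P W k"
  proof -
    have "\<forall>i\<in>{1..<k}. Z i \<in> P" using Zi by auto
    moreover have "W \<noteq> {}" using wW by blast
    ultimately show ?thesis unfolding inV_def using k1 W_def by blast
  qed
  have memx: "\<And>l. l < k \<Longrightarrow> x \<in> (T^^l) ` W \<longleftrightarrow> l = m0"
  proof -
    fix l assume lk: "l < k"
    show "x \<in> (T^^l) ` W \<longleftrightarrow> l = m0"
    proof
      assume "x \<in> (T^^l) ` W"
      then obtain v where v: "v \<in> W" "x = (T^^l) v" by blast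
      show "l = m0"
      proof (rule ccontr)
        assume ne: "l \<noteq> m0"
        show False
        proof (cases "l < m0")
          case True
          have "(g^^l) x = v" using v funpow_cancel[of g T, OF gT, of l 0] by simp
          moreover have "(g^^l) x = (T^^(m0 - l)) w"
            using Twm0 funpow_cancel[of g T, OF gT, of l "m0 - l"] True by (metis le_add_diff_inverse less_imp_le)
          ultimately have "v = (T^^(m0 - l)) w" by simp
          moreover have "(T^^(m0 - l)) w \<notin> E" using notE True m0k by simp
          ultimately show False using v WE by blast
        next
          case False
          then have lg: "m0 < l" using ne by simp
          have "w = (T^^(l - m0)) v"
            using v funpow_cancel[of g T, OF gT, of m0 "l - m0"] lg w_def by (metis le_add_diff_inverse less_imp_le)
          moreover have "(T^^(l - m0)) v \<notin> E" using Wi[OF v(1)] lg lk by simp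
          ultimately show False using wE by simp
        qed
      qed
    next
      assume "l = m0" then show "x \<in> (T^^l) ` W" using Twm0 wW by blast
    qed
  qed
  define F where "F = (\<lambda>y. \<Sum>l<k. chi ((T ^^ l) ` W) y :: 'k)"
  have Fx: "F x = 1"
  proof -
    have "F x = (\<Sum>l<k. if l = m0 then 1 else 0)"
      unfolding F_def chi_def by (intro sum.cong refl) (simp add: memx)
    also have "\<dots> = 1" using m0k by simp
    finally show ?thesis .
  qed
  have hWF: "hW T W k = cp_mono F 0" unfolding hW_def F_def by simp
  have supp: "{i. cp_mono F 0 i \<noteq> (\<lambda>_. 0)} = {0::int}"
  proof -
    have "F \<noteq> (\<lambda>_. 0)" using Fx by (metis one_neq_zero)
    then show ?thesis unfolding cp_mono_def by auto
  qed
  have bx: "b 0 x = lam U"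
  proof -
    have "b 0 x = (\<Sum>U'\<in>\<U>. lam U' * chi U' x)" using b_repr by simp
    also have "\<dots> = lam U * chi U x"
    proof (rule sum.remove[OF U_fin UU, THEN trans])
      have "\<forall>U'\<in>\<U> - {U}. lam U' * chi U' x = 0"
        using U_disj UU xU unfolding chi_def by auto
      then have "(\<Sum>U'\<in>\<U> - {U}. lam U' * chi U' x) = 0" by (intro sum.neutral) blast
      then show "lam U * chi U x + (\<Sum>U'\<in>\<U> - {U}. lam U' * chi U' x) = lam U * chi U x" by simp
    qed
    also have "\<dots> = lam U" using xU unfolding chi_def by simp
    finally show ?thesis .
  qed
  have "cp_mult T (hW T W k) b 0 x = F x * b 0 (tpow T 0 x)"
    unfolding hWF cp_mult_def supp by (simp add: cp_mono_def)
  also have "\<dots> = lam U" using Fx bx by (simp add: tpow_def)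
  finally have "cp_mult T (hW T W k) b 0 x \<noteq> 0" using lam_nz UU by simp
  then have "cp_mult T (hW T W k) b \<noteq> cp_zero" unfolding cp_zero_def by metis
  with inv show ?thesis by blast
qed


end
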